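(* Let $1\le k\le n-2$ and let $\Sigma=\mathbb{S}^k\times\mathbb{R}^{n-k}\subset\mathbb{R}^{n+1}$ be a self-shrinker. Let $P_1,P_2\subset\mathbb{R}^{n-k}$ be two orthogonal $(n-k-1)$-dimensional linear subspaces, which divide $\mathbb{R}^{n-k}$ into four open quarter-spaces $Q_1,\dots,Q_4$. Then each $\mathbb{S}^k\times Q_i\subset\Sigma$ is stable.
   Context: $\mathbb{S}^k$ is the round sphere of radius $\sqrt{2k}$ centered at the origin of $\mathbb{R}^{k+1}$. Stability operator: $Lf=\Delta f-\tfrac12\langle\vec x,\nabla f\rangle+(|A|^2+\tfrac12)f$. A region $\Omega$ is stable if there is a function $u$ with $Lu=0$ and $u>0$ on $\Omega$. *)

theory Defs
  imports "HOL-Analysis.Analysis"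
begin

text \<open>Ambient space R^(n+1) = 'a \<times> 'b with DIM('a) = k+1, DIM('b) = n-k.
  The cylinder is Sigma = sphere 0 R \<times> UNIV, R = sqrt(2k).\<close>

definition shr_k :: "'a::euclidean_space itself \<Rightarrow> nat" where
  "shr_k _ = DIM('a) - 1"

definition shr_radius :: "'a::euclidean_space itself \<Rightarrow> real" where
  "shr_radius t = sqrt (2 * real (shr_k t))"

text \<open>|A|^2 of S^k(R) \<times> R^(n-k): k principal curvatures equal to 1/R, the rest 0.\<close>
definition shr_Asq :: "'a::euclidean_space itself \<Rightarrow> real" where
  "shr_Asq t = real (shr_k t) * (1 / shr_radius t)^2"

definition cylinder :: "real \<Rightarrow> ('a::euclidean_space \<times> 'b::euclidean_space) set" where
  "cylinder R = sphere 0 R \<times> UNIV"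

text \<open>Nearest-point projection onto the cylinder (defined where fst p \<noteq> 0).\<close>
definition nproj :: "real \<Rightarrow> ('a::euclidean_space \<times> 'b::euclidean_space) \<Rightarrow> 'a \<times> 'b" where
  "nproj R p = ((R / norm (fst p)) *\<^sub>R fst p, snd p)"

definition egrad :: "('c::euclidean_space \<Rightarrow> real) \<Rightarrow> 'c \<Rightarrow> 'c" where
  "egrad f x = (\<Sum>b\<in>Basis. frechet_derivative f (at x) b *\<^sub>R b)"

definition partial :: "('c::euclidean_space \<Rightarrow> real) \<Rightarrow> 'c \<Rightarrow> 'c \<Rightarrow> real" where
  "partial f b x = frechet_derivative f (at x) b"

definition elap :: "('c::euclidean_space \<Rightarrow> real) \<Rightarrow> 'c \<Rightarrow> real" where
  "elap f x = (\<Sum>b\<in>Basis. partial (partial f b) b x)"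

definition C2_on :: "('c::euclidean_space \<Rightarrow> real) \<Rightarrow> 'c set \<Rightarrow> bool" where
  "C2_on f W \<longleftrightarrow> (\<forall>x\<in>W. f differentiable (at x)) \<and>
     (\<forall>b\<in>Basis. \<forall>x\<in>W. partial f b differentiable (at x)) \<and>
     (\<forall>b\<in>Basis. \<forall>c\<in>Basis. continuous_on W (partial (partial f b) c))"

text \<open>The intrinsic gradient / Laplace-Beltrami
  operator of u on the cylinder are computed as the Euclidean gradient / Laplacian of the
  extension of u that is constant along normal lines (u \<circ> nproj R).\<close>
definition stab_op :: "real \<Rightarrow> real \<Rightarrow> ('a::euclidean_space \<times> 'b::euclidean_space \<Rightarrow> real)
    \<Rightarrow> 'a \<times> 'b \<Rightarrow> real" where
  "stab_op R Asq u x = elap (u \<circ> nproj R) x - 1/2 * (x \<bullet> egrad (u \<circ> nproj R) x)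
     + (Asq + 1/2) * u x"

text \<open>A region Omega of the cylinder is stable if there is u, C^2 on Omega (i.e. its
  normal extension is C^2 on the open tube over Omega), with L u = 0 and u > 0 on Omega.\<close>
definition stable_region :: "real \<Rightarrow> real \<Rightarrow> ('a::euclidean_space \<times> 'b::euclidean_space) set \<Rightarrow> bool" where
  "stable_region R Asq \<Omega> \<longleftrightarrow> (\<exists>u. C2_on (u \<circ> nproj R) {p. fst p \<noteq> 0 \<and> nproj R p \<in> \<Omega>} \<and>
      (\<forall>x\<in>\<Omega>. stab_op R Asq u x = 0 \<and> u x > 0))"

end

theory Submission
  imports Defs
begin

lemma quad_deriv:
  fixes w1 w2 :: "'c::euclidean_space"
  shows "((\<lambda>p. c * ((w1 \<bullet> p) * (w2 \<bullet> p))) has_derivative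
          (\<lambda>h. c * ((w1 \<bullet> h) * (w2 \<bullet> x) + (w1 \<bullet> x) * (w2 \<bullet> h)))) (at x)"
  by (auto intro!: derivative_eq_intros simp: algebra_simps)

lemma quad_partial:
  fixes w1 w2 :: "'c::euclidean_space"
  shows "partial (\<lambda>p. c * ((w1 \<bullet> p) * (w2 \<bullet> p))) b =
         (\<lambda>x. c * ((w1 \<bullet> b) * (w2 \<bullet> x) + (w1 \<bullet> x) * (w2 \<bullet> b)))"
  unfolding partial_def using frechet_derivative_at[OF quad_deriv, of c w1 w2]
  by (auto simp: fun_eq_iff)

lemma lin_deriv:
  fixes w1 w2 :: "'c::euclidean_space"
  shows "((\<lambda>x. c * ((w1 \<bullet> b) * (w2 \<bullet> x) + (w1 \<bullet> x) * (w2 \<bullet> b))) has_derivative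
          (\<lambda>h. c * ((w1 \<bullet> b) * (w2 \<bullet> h) + (w1 \<bullet> h) * (w2 \<bullet> b)))) (at x)"
  by (auto intro!: derivative_eq_intros simp: algebra_simps)

lemma quad_partial2:
  fixes w1 w2 :: "'c::euclidean_space"
  shows "partial (partial (\<lambda>p. c * ((w1 \<bullet> p) * (w2 \<bullet> p))) b) d =
         (\<lambda>x. c * ((w1 \<bullet> b) * (w2 \<bullet> d) + (w1 \<bullet> d) * (w2 \<bullet> b)))"
  unfolding quad_partial partial_def using frechet_derivative_at[OF lin_deriv, of c w1 b w2]
  by (auto simp: fun_eq_iff)

lemma quad_C2:
  fixes w1 w2 :: "'c::euclidean_space"
  shows "C2_on (\<lambda>p. c * ((w1 \<bullet> p) * (w2 \<bullet> p))) W"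
  unfolding C2_on_def quad_partial2
  unfolding quad_partial
  using quad_deriv lin_deriv by (auto simp: differentiable_def) blast+

lemma quad_elap:
  fixes w1 w2 :: "'c::euclidean_space"
  shows "elap (\<lambda>p. c * ((w1 \<bullet> p) * (w2 \<bullet> p))) x = 2 * c * (w1 \<bullet> w2)"
proof -
  have "elap (\<lambda>p. c * ((w1 \<bullet> p) * (w2 \<bullet> p))) x
      = (\<Sum>b\<in>Basis. 2 * c * ((w1 \<bullet> b) * (w2 \<bullet> b)))"
    unfolding elap_def quad_partial2 by (simp add: algebra_simps)
  also have "\<dots> = 2 * c * (\<Sum>b\<in>Basis. (w1 \<bullet> b) * (w2 \<bullet> b))"
    by (simp add: sum_distrib_left)
  also have "\<dots> = 2 * c * (w1 \<bullet> w2)"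
    by (simp add: euclidean_inner[of w1 w2])
  finally show ?thesis .
qed

lemma quad_egrad:
  fixes w1 w2 :: "'c::euclidean_space"
  shows "x \<bullet> egrad (\<lambda>p. c * ((w1 \<bullet> p) * (w2 \<bullet> p))) x = 2 * (c * ((w1 \<bullet> x) * (w2 \<bullet> x)))"
proof -
  have "egrad (\<lambda>p. c * ((w1 \<bullet> p) * (w2 \<bullet> p))) x
      = (c * (w2 \<bullet> x)) *\<^sub>R (\<Sum>b\<in>Basis. (w1 \<bullet> b) *\<^sub>R b) + (c * (w1 \<bullet> x)) *\<^sub>R (\<Sum>b\<in>Basis. (w2 \<bullet> b) *\<^sub>R b)"
    unfolding egrad_def frechet_derivative_at[OF quad_deriv, symmetric]
    by (simp add: scaleR_sum_right sum.distrib[symmetric] algebra_simps scaleR_add_left)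
  also have "\<dots> = (c * (w2 \<bullet> x)) *\<^sub>R w1 + (c * (w1 \<bullet> x)) *\<^sub>R w2"
    by (simp add: euclidean_representation inner_commute[of _ w1] inner_commute[of _ w2])
  finally show ?thesis by (simp add: algebra_simps inner_commute)
qed

lemma hyperplane_normal:
  fixes P :: "'b::euclidean_space set"
  assumes "subspace P" "dim P = DIM('b) - 1"
  obtains v where "v \<noteq> 0" "\<forall>p\<in>P. orthogonal v p" "P = {y. v \<bullet> y = 0}"
proof -
  have "dim P < DIM('b)" using assms(2) by (simp add: DIM_positive)
  then obtain v where v: "v \<noteq> 0" "\<And>y. y \<in> span P \<Longrightarrow> orthogonal v y"
    using orthogonal_to_subspace_exists[OF \<open>dim P < DIM('b)\<close>] by blast
  have o: "\<forall>p\<in>P. orthogonal v p" using v(2) span_base by blast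
  have sub: "P \<subseteq> {y. v \<bullet> y = 0}" using o by (auto simp: orthogonal_def)
  have "P = {y. v \<bullet> y = 0}"
    apply (rule subspace_dim_equal[OF assms(1) _ sub])
    using subspace_hyperplane[of v] dim_hyperplane[OF v(1)] assms(2) by auto
  with v(1) o that show ?thesis by blast
qed

theorem proposition4p4:
  fixes P1 P2 :: "'b::euclidean_space set"
  assumes k_ge: "DIM('a::euclidean_space) \<ge> 2"
    and nk_ge: "DIM('b) \<ge> 2"
    and P1: "subspace P1" "dim P1 = DIM('b) - 1"
    and P2: "subspace P2" "dim P2 = DIM('b) - 1"
    and orth: "\<forall>v w. (\<forall>p\<in>P1. orthogonal v p) \<longrightarrow> (\<forall>q\<in>P2. orthogonal w q) \<longrightarrow> orthogonal v w"
    and Q: "Q \<in> components (- (P1 \<union> P2))"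
  shows "stable_region (shr_radius TYPE('a)) (shr_Asq TYPE('a))
           ((sphere (0::'a) (shr_radius TYPE('a))) \<times> Q)"
proof -
  obtain v1 where v1: "v1 \<noteq> 0" "\<forall>p\<in>P1. orthogonal v1 p" "P1 = {y. v1 \<bullet> y = 0}"
    using hyperplane_normal[OF P1] by blast
  obtain v2 where v2: "v2 \<noteq> 0" "\<forall>p\<in>P2. orthogonal v2 p" "P2 = {y. v2 \<bullet> y = 0}"
    using hyperplane_normal[OF P2] by blast
  have v12: "v1 \<bullet> v2 = 0" using orth v1(2) v2(2) by (auto simp: orthogonal_def)
  have cQ: "connected Q" using Q in_components_connected by blast
  have Qsub: "Q \<subseteq> - (P1 \<union> P2)" using Q in_components_subset by blast
  obtain y0 where y0: "y0 \<in> Q" using Q in_components_nonempty by blast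
  define g where "g = (\<lambda>y::'b. (v1 \<bullet> y) * (v2 \<bullet> y))"
  have gnz: "g y \<noteq> 0" if "y \<in> Q" for y
    using Qsub that v1(3) v2(3) by (auto simp: g_def)
  have gcont: "continuous_on Q g" unfolding g_def by (intro continuous_intros)
  have conn: "connected (g ` Q)" by (rule connected_continuous_image[OF gcont cQ])
  define c where "c = g y0"
  have cpos: "c * g y > 0" if "y \<in> Q" for y
  proof (rule ccontr)
    assume "\<not> c * g y > 0"
    hence le: "c * g y \<le> 0" by simp
    have "0 \<in> g ` Q"
    proof (cases "c \<le> 0")
      case True
      hence "g y \<ge> 0" using le gnz[OF y0] unfolding c_def
        by (metis mult_le_0_iff not_le order_antisym_conv)
      thus ?thesis using connectedD_interval[OF conn, of c "g y" 0] True that y0 c_def by auto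
    next
      case False
      hence "g y \<le> 0" using le by (simp add: mult_le_0_iff)
      thus ?thesis using connectedD_interval[OF conn, of "g y" c 0] False that y0 c_def by auto
    qed
    thus False using gnz by auto
  qed
  define w1 :: "'a \<times> 'b" where "w1 = (0, v1)"
  define w2 :: "'a \<times> 'b" where "w2 = (0, v2)"
  define u where "u = (\<lambda>p. c * ((w1 \<bullet> p) * (w2 \<bullet> p)))"
  let ?R = "shr_radius TYPE('a)"
  have uproj: "u \<circ> nproj ?R = u"
    by (auto simp: fun_eq_iff u_def nproj_def w1_def w2_def)
  have Asq: "shr_Asq TYPE('a) = 1/2"
  proof -
    have k: "shr_k TYPE('a) \<ge> 1" using k_ge by (simp add: shr_k_def)
    show ?thesis unfolding shr_Asq_def shr_radius_def using k
      by (simp add: power_divide)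
  qed
  have w12: "w1 \<bullet> w2 = 0" using v12 by (simp add: w1_def w2_def)
  show ?thesis
    unfolding stable_region_def
  proof (intro exI conjI ballI)
    show "C2_on (u \<circ> nproj ?R) {p. fst p \<noteq> 0 \<and> nproj ?R p \<in> sphere 0 ?R \<times> Q}"
      by (subst uproj) (simp add: u_def quad_C2)
  next
    fix x :: "'a \<times> 'b"
    assume x: "x \<in> sphere 0 ?R \<times> Q"
    show "stab_op ?R (shr_Asq TYPE('a)) u x = 0"
      unfolding stab_op_def uproj Asq
      unfolding u_def quad_elap quad_egrad w12 by simp
    have "u x = c * g (snd x)" by (simp add: u_def g_def w1_def w2_def inner_prod_def split: prod.splits)
    thus "u x > 0" using cpos x by auto
  qed
qed

end
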